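(* Let $k\ge1$, $1\le r\le4k^2$, and let $\overline{\mathcal{B}}(2k,2k;r)$ be the set of boards in $\mathcal{B}(2k,2k;r)$ whose board partition $(\lambda_1,\lambda_2,\lambda_3,\lambda_4)$ satisfies: $\lambda_1\ge\lambda_i$ for all $i>1$; $\lambda_2\ge\lambda_4$; if $\lambda_1=\lambda_2$ then $\lambda_3\ge\lambda_4$. For a board partition $\lambda=(\lambda_1,\lambda_2,\lambda_3,\lambda_4)$ of some board in $\overline{\mathcal{B}}(2k,2k;r)$, let $K\le D_4$ be the subgroup of symmetries preserving the set of all boards with board partition $\lambda$. Then: if $\lambda_1=\lambda_2=\lambda_3=\lambda_4$, $K=D_4$ and $[D_4:K]=1$; if $\lambda_1=\lambda_3>\lambda_2=\lambda_4$, $K=\langle D,D'\rangle$ and $[D_4:K]=2$; if $\lambda_1=\lambda_2>\lambda_3=\lambda_4$, $K=\langle V\rangle$ and $[D_4:K]=4$; if $\lambda_1=\lambda_3$ and $\lambda_2\ne\lambda_4$, $K=\langle D'\rangle$ and $[D_4:K]=4$; if $\lambda_2=\lambda_4$ and $\lambda_1\ne\lambda_3$, $K=\langle D\rangle$ and $[D_4:K]=4$; in all other cases $K$ is trivial and $[D_4:K]=8$.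
   Context: A $2k\times2k$ grid with cells $(i,j)$, rows $i$ numbered top to bottom, columns $j$ left to right; $\mathcal{B}(2k,2k;r)$ is the set of boards, i.e. subsets of exactly $r$ blocked cells. $D_4$ is the symmetry group of the square acting on boards: rotations $R_0,R_{90},R_{180},R_{270}$ about the center, $H$ = reflection across the horizontal midline, $V$ = reflection across the vertical midline, $D$ = reflection across the main diagonal from top-left to bottom-right ($(i,j)\mapsto(j,i)$), $D'$ = reflection across the anti-diagonal from bottom-left to top-right ($(i,j)\mapsto(2k+1-j,2k+1-i)$). Quadrants: $Q_1$ = rows $1..k$, cols $1..k$; $Q_2$ = rows $1..k$, cols $k+1..2k$; $Q_3$ = rows $k+1..2k$, cols $k+1..2k$; $Q_4$ = rows $k+1..2k$, cols $1..k$; the board partition is $(\lambda_1,\dots,\lambda_4)$ with $\lambda_i$ the number of blocked cells in $Q_i$. *)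

theory Defs
  imports Main
begin

type_synonym cell = "nat \<times> nat"

definition grid :: "nat \<Rightarrow> cell set" where
  "grid k = {1..2*k} \<times> {1..2*k}"

definition boards :: "nat \<Rightarrow> nat \<Rightarrow> cell set set" where
  "boards k r = {B. B \<subseteq> grid k \<and> card B = r}"

definition Q1 :: "nat \<Rightarrow> cell set" where "Q1 k = {1..k} \<times> {1..k}"
definition Q2 :: "nat \<Rightarrow> cell set" where "Q2 k = {1..k} \<times> {k+1..2*k}"
definition Q3 :: "nat \<Rightarrow> cell set" where "Q3 k = {k+1..2*k} \<times> {k+1..2*k}"
definition Q4 :: "nat \<Rightarrow> cell set" where "Q4 k = {k+1..2*k} \<times> {1..k}"

definition board_partition :: "nat \<Rightarrow> cell set \<Rightarrow> nat \<times> nat \<times> nat \<times> nat" where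
  "board_partition k B =
     (card (B \<inter> Q1 k), card (B \<inter> Q2 k), card (B \<inter> Q3 k), card (B \<inter> Q4 k))"

definition canonical_partition :: "nat \<times> nat \<times> nat \<times> nat \<Rightarrow> bool" where
  "canonical_partition lam = (case lam of (l1, l2, l3, l4) \<Rightarrow>
     l1 \<ge> l2 \<and> l1 \<ge> l3 \<and> l1 \<ge> l4 \<and> l2 \<ge> l4 \<and> (l1 = l2 \<longrightarrow> l3 \<ge> l4))"

definition boards_bar :: "nat \<Rightarrow> nat \<Rightarrow> cell set set" where
  "boards_bar k r = {B \<in> boards k r. canonical_partition (board_partition k B)}"

text \<open>The symmetries of the square, as maps on cells; outside the grid they act as
  the identity, so that composition of maps is the group operation of D4.\<close>
definition on_grid :: "nat \<Rightarrow> (cell \<Rightarrow> cell) \<Rightarrow> cell \<Rightarrow> cell" where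
  "on_grid k f c = (if c \<in> grid k then f c else c)"

definition R0 :: "nat \<Rightarrow> cell \<Rightarrow> cell" where "R0 k = id"
definition R90 :: "nat \<Rightarrow> cell \<Rightarrow> cell" where
  "R90 k = on_grid k (\<lambda>(i, j). (j, 2*k+1-i))"
definition R180 :: "nat \<Rightarrow> cell \<Rightarrow> cell" where
  "R180 k = on_grid k (\<lambda>(i, j). (2*k+1-i, 2*k+1-j))"
definition R270 :: "nat \<Rightarrow> cell \<Rightarrow> cell" where
  "R270 k = on_grid k (\<lambda>(i, j). (2*k+1-j, i))"
definition Hr :: "nat \<Rightarrow> cell \<Rightarrow> cell" where
  "Hr k = on_grid k (\<lambda>(i, j). (2*k+1-i, j))"
definition Vr :: "nat \<Rightarrow> cell \<Rightarrow> cell" where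
  "Vr k = on_grid k (\<lambda>(i, j). (i, 2*k+1-j))"
definition Dr :: "nat \<Rightarrow> cell \<Rightarrow> cell" where
  "Dr k = on_grid k (\<lambda>(i, j). (j, i))"
definition D'r :: "nat \<Rightarrow> cell \<Rightarrow> cell" where
  "D'r k = on_grid k (\<lambda>(i, j). (2*k+1-j, 2*k+1-i))"

definition d4 :: "nat \<Rightarrow> (cell \<Rightarrow> cell) set" where
  "d4 k = {R0 k, R90 k, R180 k, R270 k, Hr k, Vr k, Dr k, D'r k}"

inductive_set generated :: "(cell \<Rightarrow> cell) set \<Rightarrow> (cell \<Rightarrow> cell) set"
  for S where
  gen_id: "id \<in> generated S"
| gen_base: "g \<in> S \<Longrightarrow> g \<in> generated S"
| gen_comp: "g \<in> generated S \<Longrightarrow> h \<in> generated S \<Longrightarrow> g \<circ> h \<in> generated S"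

definition boards_with_partition ::
  "nat \<Rightarrow> nat \<Rightarrow> nat \<times> nat \<times> nat \<times> nat \<Rightarrow> cell set set" where
  "boards_with_partition k r lam = {B \<in> boards k r. board_partition k B = lam}"

definition stab :: "nat \<Rightarrow> nat \<Rightarrow> nat \<times> nat \<times> nat \<times> nat \<Rightarrow> (cell \<Rightarrow> cell) set" where
  "stab k r lam = {g \<in> d4 k. (\<lambda>B. g ` B) ` boards_with_partition k r lam
                              = boards_with_partition k r lam}"

definition d4_index :: "nat \<Rightarrow> (cell \<Rightarrow> cell) set \<Rightarrow> nat" where
  "d4_index k K = card (d4 k) div card K"

end

theory Submission imports Defs begin

lemma on_grid_img: "A \<subseteq> grid k \<Longrightarrow> on_grid k f ` A = f ` A"
  by (auto simp: on_grid_def intro!: image_cong)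

lemma img_inv: assumes "\<And>x. x\<in>A \<Longrightarrow> f x \<in> B" "\<And>y. y\<in>B \<Longrightarrow> h y \<in> A" "\<And>y. y\<in>B \<Longrightarrow> f (h y) = y"
  shows "f ` A = B"
  using assms by (auto intro!: image_eqI[where x="h y" for y] )

lemma Qsub: "Q1 k \<subseteq> grid k" "Q2 k \<subseteq> grid k" "Q3 k \<subseteq> grid k" "Q4 k \<subseteq> grid k" "grid k \<subseteq> grid k"
  by (auto simp: Q1_def Q2_def Q3_def Q4_def grid_def)

lemmas Qdefs = Q1_def Q2_def Q3_def Q4_def grid_def

lemma R90_Q: "R90 k ` Q1 k = Q2 k" "R90 k ` Q2 k = Q3 k" "R90 k ` Q3 k = Q4 k" "R90 k ` Q4 k = Q1 k"
   "R90 k ` grid k = grid k"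
  unfolding R90_def by (simp_all only: on_grid_img Qsub; rule img_inv[where h="\<lambda>(i,j). (2*k+1-j, i)"];
     force simp: Qdefs)+

lemma R180_Q: "R180 k ` Q1 k = Q3 k" "R180 k ` Q2 k = Q4 k" "R180 k ` Q3 k = Q1 k" "R180 k ` Q4 k = Q2 k"
   "R180 k ` grid k = grid k"
  unfolding R180_def by (simp_all only: on_grid_img Qsub; rule img_inv[where h="\<lambda>(i,j). (2*k+1-i, 2*k+1-j)"];
     force simp: Qdefs)+

lemma R270_Q: "R270 k ` Q1 k = Q4 k" "R270 k ` Q2 k = Q1 k" "R270 k ` Q3 k = Q2 k" "R270 k ` Q4 k = Q3 k"
   "R270 k ` grid k = grid k"
  unfolding R270_def by (simp_all only: on_grid_img Qsub; rule img_inv[where h="\<lambda>(i,j). (j, 2*k+1-i)"];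
     force simp: Qdefs)+

lemma H_Q: "Hr k ` Q1 k = Q4 k" "Hr k ` Q2 k = Q3 k" "Hr k ` Q3 k = Q2 k" "Hr k ` Q4 k = Q1 k"
   "Hr k ` grid k = grid k"
  unfolding Hr_def by (simp_all only: on_grid_img Qsub; rule img_inv[where h="\<lambda>(i,j). (2*k+1-i, j)"];
     force simp: Qdefs)+

lemma V_Q: "Vr k ` Q1 k = Q2 k" "Vr k ` Q2 k = Q1 k" "Vr k ` Q3 k = Q4 k" "Vr k ` Q4 k = Q3 k"
   "Vr k ` grid k = grid k"
  unfolding Vr_def by (simp_all only: on_grid_img Qsub; rule img_inv[where h="\<lambda>(i,j). (i, 2*k+1-j)"];
     force simp: Qdefs)+

lemma D_Q: "Dr k ` Q1 k = Q1 k" "Dr k ` Q2 k = Q4 k" "Dr k ` Q3 k = Q3 k" "Dr k ` Q4 k = Q2 k"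
   "Dr k ` grid k = grid k"
  unfolding Dr_def by (simp_all only: on_grid_img Qsub; rule img_inv[where h="\<lambda>(i,j). (j, i)"];
     force simp: Qdefs)+

lemma D'_Q: "D'r k ` Q1 k = Q3 k" "D'r k ` Q2 k = Q2 k" "D'r k ` Q3 k = Q1 k" "D'r k ` Q4 k = Q4 k"
   "D'r k ` grid k = grid k"
  unfolding D'r_def by (simp_all only: on_grid_img Qsub; rule img_inv[where h="\<lambda>(i,j). (2*k+1-j, 2*k+1-i)"];
     force simp: Qdefs)+

lemma R0_Q: "R0 k ` Q1 k = Q1 k" "R0 k ` Q2 k = Q2 k" "R0 k ` Q3 k = Q3 k" "R0 k ` Q4 k = Q4 k"
   "R0 k ` grid k = grid k"
  by (auto simp: R0_def)

lemma inj_helper: assumes "\<And>x. x \<in> grid k \<Longrightarrow> h (f x) = x" shows "inj_on (on_grid k f) (grid k)"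
  by (rule inj_on_inverseI[where g=h]) (simp add: on_grid_def assms)

lemma injs: "inj_on (R0 k) (grid k)" "inj_on (R90 k) (grid k)" "inj_on (R180 k) (grid k)"
  "inj_on (R270 k) (grid k)" "inj_on (Hr k) (grid k)" "inj_on (Vr k) (grid k)"
  "inj_on (Dr k) (grid k)" "inj_on (D'r k) (grid k)"
  unfolding R0_def R90_def R180_def R270_def Hr_def Vr_def Dr_def D'r_def
         apply simp
        apply (rule inj_helper[where h="\<lambda>(i,j). (2*k+1-j, i)"]; force simp: Qdefs)
       apply (rule inj_helper[where h="\<lambda>(i,j). (2*k+1-i, 2*k+1-j)"]; force simp: Qdefs)
      apply (rule inj_helper[where h="\<lambda>(i,j). (j, 2*k+1-i)"]; force simp: Qdefs)
     apply (rule inj_helper[where h="\<lambda>(i,j). (2*k+1-i, j)"]; force simp: Qdefs)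
    apply (rule inj_helper[where h="\<lambda>(i,j). (i, 2*k+1-j)"]; force simp: Qdefs)
   apply (rule inj_helper[where h="\<lambda>(i,j). (j, i)"]; force simp: Qdefs)
  apply (rule inj_helper[where h="\<lambda>(i,j). (2*k+1-j, 2*k+1-i)"]; force simp: Qdefs)
  done

lemma card_img_Q: assumes "inj_on g (grid k)" "B \<subseteq> grid k" "Q \<subseteq> grid k"
  shows "card (g ` B \<inter> g ` Q) = card (B \<inter> Q)"
proof -
  have "g ` B \<inter> g ` Q = g ` (B \<inter> Q)" using assms by (simp add: inj_on_image_Int)
  moreover have "inj_on g (B \<inter> Q)" using assms by (meson inf.coboundedI1 inj_on_subset)
  ultimately show ?thesis by (simp add: card_image)
qed

lemma bp_gen: assumes "inj_on g (grid k)" "B \<subseteq> grid k"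
  "g ` Q1 k = A1" "g ` Q2 k = A2" "g ` Q3 k = A3" "g ` Q4 k = A4"
  shows "card (g`B \<inter> A1) = card (B \<inter> Q1 k)" "card (g`B \<inter> A2) = card (B \<inter> Q2 k)"
        "card (g`B \<inter> A3) = card (B \<inter> Q3 k)" "card (g`B \<inter> A4) = card (B \<inter> Q4 k)"
  using card_img_Q[OF assms(1,2) Qsub(1)] card_img_Q[OF assms(1,2) Qsub(2)]
        card_img_Q[OF assms(1,2) Qsub(3)] card_img_Q[OF assms(1,2) Qsub(4)] assms(3-6) by auto

lemma bps: assumes "B \<subseteq> grid k" and "board_partition k B = (a,b,c,d)"
  shows "board_partition k (R0 k ` B) = (a,b,c,d)"
    "board_partition k (R90 k ` B) = (d,a,b,c)"
    "board_partition k (R180 k ` B) = (c,d,a,b)"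
    "board_partition k (R270 k ` B) = (b,c,d,a)"
    "board_partition k (Hr k ` B) = (d,c,b,a)"
    "board_partition k (Vr k ` B) = (b,a,d,c)"
    "board_partition k (Dr k ` B) = (a,d,c,b)"
    "board_partition k (D'r k ` B) = (c,b,a,d)"
  using assms(2) unfolding board_partition_def
  using bp_gen[OF injs(1) assms(1) R0_Q(1-4)] bp_gen[OF injs(2) assms(1) R90_Q(1-4)]
   bp_gen[OF injs(3) assms(1) R180_Q(1-4)] bp_gen[OF injs(4) assms(1) R270_Q(1-4)]
   bp_gen[OF injs(5) assms(1) H_Q(1-4)] bp_gen[OF injs(6) assms(1) V_Q(1-4)]
   bp_gen[OF injs(7) assms(1) D_Q(1-4)] bp_gen[OF injs(8) assms(1) D'_Q(1-4)]
  by auto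


lemma finite_grid: "finite (grid k)" by (simp add: grid_def)

lemma stab_char: assumes "g \<in> d4 k" "inj_on g (grid k)" "g ` grid k = grid k"
  "\<And>B'. B' \<subseteq> grid k \<Longrightarrow> board_partition k B' = lam \<Longrightarrow> board_partition k (g`B') = lam'"
  "B \<in> boards k r" "board_partition k B = lam"
  shows "g \<in> stab k r lam \<longleftrightarrow> lam' = lam"
proof -
  let ?W = "boards_with_partition k r lam"
  have BW: "B \<in> ?W" using assms(5,6) by (simp add: boards_with_partition_def)
  have Bg: "B \<subseteq> grid k" using assms(5) by (simp add: boards_def)
  show ?thesis
  proof
    assume "g \<in> stab k r lam"
    then have "(\<lambda>B. g ` B) ` ?W = ?W" by (simp add: stab_def)
    then have "g ` B \<in> ?W" using BW by blast
    then have "board_partition k (g`B) = lam" by (simp add: boards_with_partition_def)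
    with assms(4)[OF Bg assms(6)] show "lam' = lam" by simp
  next
    assume eq: "lam' = lam"
    have sub: "(\<lambda>B. g ` B) ` ?W \<subseteq> ?W"
    proof
      fix X assume "X \<in> (\<lambda>B. g ` B) ` ?W"
      then obtain B' where B': "B' \<in> ?W" "X = g ` B'" by blast
      have g1: "B' \<subseteq> grid k" "card B' = r" "board_partition k B' = lam"
        using B'(1) by (auto simp: boards_with_partition_def boards_def)
      have "inj_on g B'" using assms(2) g1(1) inj_on_subset by blast
      then have "card X = r" using B'(2) g1 by (simp add: card_image)
      moreover have "X \<subseteq> grid k" using B'(2) g1(1) assms(3) by blast
      moreover have "board_partition k X = lam" using assms(4)[OF g1(1) g1(3)] eq B'(2) by simp
      ultimately show "X \<in> ?W" by (simp add: boards_with_partition_def boards_def)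
    qed
    have inj: "inj_on (\<lambda>B. g ` B) ?W"
      by (rule inj_onI) (auto simp: boards_with_partition_def boards_def inj_on_image_eq_iff[OF assms(2)])
    have fin: "finite ?W"
      by (rule finite_subset[of _ "Pow (grid k)"]) (auto simp: boards_with_partition_def boards_def finite_grid)
    have "(\<lambda>B. g ` B) ` ?W = ?W" using endo_inj_surj[OF fin sub inj] .
    then show "g \<in> stab k r lam" using assms(1) by (simp add: stab_def)
  qed
qed

lemmas symdefs = R0_def R90_def R180_def R270_def Hr_def Vr_def Dr_def D'r_def on_grid_def grid_def

lemma comps: "Dr k \<circ> Dr k = id" "D'r k \<circ> D'r k = id" "Vr k \<circ> Vr k = id" "R180 k \<circ> R180 k = id"
  "Dr k \<circ> D'r k = R180 k" "D'r k \<circ> Dr k = R180 k" "Dr k \<circ> R180 k = D'r k" "R180 k \<circ> Dr k = D'r k"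
  "D'r k \<circ> R180 k = Dr k" "R180 k \<circ> D'r k = Dr k"
  by (rule ext; auto simp: symdefs)+

lemma distinct8: assumes "k \<ge> 1" shows "distinct [R0 k, R90 k, R180 k, R270 k, Hr k, Vr k, Dr k, D'r k]"
proof -
  have "distinct (map (\<lambda>g. (g (1,1), g (1,2))) [R0 k, R90 k, R180 k, R270 k, Hr k, Vr k, Dr k, D'r k])"
    using assms by (simp add: symdefs)
  then show ?thesis by (simp only: distinct_map)
qed


lemma gen1: assumes "f \<circ> f = id" shows "generated {f} = {id, f}"
proof
  show "generated {f} \<subseteq> {id, f}"
  proof
    fix x assume "x \<in> generated {f}" then show "x \<in> {id, f}"
      by induct (simp, simp, (elim insertE emptyE; simp add: assms))
  qed
  show "{id, f} \<subseteq> generated {f}" by (auto intro: generated.intros)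
qed

lemma gen2: "generated {Dr k, D'r k} = {id, Dr k, D'r k, R180 k}"
proof
  show "generated {Dr k, D'r k} \<subseteq> {id, Dr k, D'r k, R180 k}"
  proof
    fix x assume "x \<in> generated {Dr k, D'r k}" then show "x \<in> {id, Dr k, D'r k, R180 k}"
      by induct (simp, blast, (elim insertE emptyE; simp add: comps))
  qed
  have "R180 k \<in> generated {Dr k, D'r k}"
    using generated.gen_comp[OF generated.gen_base generated.gen_base, of "Dr k" "{Dr k, D'r k}" "D'r k"]
    by (simp add: comps)
  then show "{id, Dr k, D'r k, R180 k} \<subseteq> generated {Dr k, D'r k}" by (auto intro: generated.intros)
qed

theorem corollary4p2:
  fixes k r l1 l2 l3 l4 :: nat and B :: "cell set"
  assumes "k \<ge> 1" and "1 \<le> r" and "r \<le> 4 * k^2"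
    and "B \<in> boards_bar k r"
    and "board_partition k B = (l1, l2, l3, l4)"
  defines "K \<equiv> stab k r (l1, l2, l3, l4)"
  shows "(l1 = l2 \<and> l2 = l3 \<and> l3 = l4 \<longrightarrow>
            K = d4 k \<and> d4_index k K = 1)
       \<and> (l1 = l3 \<and> l3 > l2 \<and> l2 = l4 \<longrightarrow>
            K = generated {Dr k, D'r k} \<and> d4_index k K = 2)
       \<and> (l1 = l2 \<and> l2 > l3 \<and> l3 = l4 \<longrightarrow>
            K = generated {Vr k} \<and> d4_index k K = 4)
       \<and> (l1 = l3 \<and> l2 \<noteq> l4 \<longrightarrow>
            K = generated {D'r k} \<and> d4_index k K = 4)
       \<and> (l2 = l4 \<and> l1 \<noteq> l3 \<longrightarrow>
            K = generated {Dr k} \<and> d4_index k K = 4)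
       \<and> (\<not> (l1 = l2 \<and> l2 = l3 \<and> l3 = l4) \<and> \<not> (l1 = l3 \<and> l3 > l2 \<and> l2 = l4)
          \<and> \<not> (l1 = l2 \<and> l2 > l3 \<and> l3 = l4) \<and> \<not> (l1 = l3 \<and> l2 \<noteq> l4)
          \<and> \<not> (l2 = l4 \<and> l1 \<noteq> l3) \<longrightarrow>
            K = {id} \<and> d4_index k K = 8)"
  proof -
  let ?lam = "(l1, l2, l3, l4)"
  have Bb: "B \<in> boards k r" and can: "canonical_partition ?lam"
    using assms(4,5) by (auto simp: boards_bar_def)
  have c: "l1 \<ge> l2" "l1 \<ge> l3" "l1 \<ge> l4" "l2 \<ge> l4" "l1 = l2 \<longrightarrow> l3 \<ge> l4"
    using can by (auto simp: canonical_partition_def)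
  have dd: "g \<in> d4 k" if "g \<in> {R0 k, R90 k, R180 k, R270 k, Hr k, Vr k, Dr k, D'r k}" for g
    using that by (simp add: d4_def)
  note sc = stab_char[OF dd _ _ _ Bb assms(5), folded K_def]
  have m0: "R0 k \<in> K" by (rule sc[THEN iffD2, OF _ injs(1) R0_Q(5) bps(1)]) auto
  have m90: "R90 k \<in> K \<longleftrightarrow> (l4,l1,l2,l3) = ?lam" by (rule sc[OF _ injs(2) R90_Q(5) bps(2)]) auto
  have m180: "R180 k \<in> K \<longleftrightarrow> (l3,l4,l1,l2) = ?lam" by (rule sc[OF _ injs(3) R180_Q(5) bps(3)]) auto
  have m270: "R270 k \<in> K \<longleftrightarrow> (l2,l3,l4,l1) = ?lam" by (rule sc[OF _ injs(4) R270_Q(5) bps(4)]) auto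
  have mH: "Hr k \<in> K \<longleftrightarrow> (l4,l3,l2,l1) = ?lam" by (rule sc[OF _ injs(5) H_Q(5) bps(5)]) auto
  have mV: "Vr k \<in> K \<longleftrightarrow> (l2,l1,l4,l3) = ?lam" by (rule sc[OF _ injs(6) V_Q(5) bps(6)]) auto
  have mD: "Dr k \<in> K \<longleftrightarrow> (l1,l4,l3,l2) = ?lam" by (rule sc[OF _ injs(7) D_Q(5) bps(7)]) auto
  have mD': "D'r k \<in> K \<longleftrightarrow> (l3,l2,l1,l4) = ?lam" by (rule sc[OF _ injs(8) D'_Q(5) bps(8)]) auto
  have Ksub: "K \<subseteq> d4 k" unfolding K_def stab_def by blast
  have mem0: "x \<in> K \<longleftrightarrow> (x = R0 k \<and> R0 k \<in> K) \<or> (x = R90 k \<and> R90 k \<in> K) \<or> (x = R180 k \<and> R180 k \<in> K)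
     \<or> (x = R270 k \<and> R270 k \<in> K) \<or> (x = Hr k \<and> Hr k \<in> K) \<or> (x = Vr k \<and> Vr k \<in> K)
     \<or> (x = Dr k \<and> Dr k \<in> K) \<or> (x = D'r k \<and> D'r k \<in> K)" for x
  proof
    assume "x \<in> K" then have "x \<in> d4 k" using Ksub by blast
    then show "(x = R0 k \<and> R0 k \<in> K) \<or> (x = R90 k \<and> R90 k \<in> K) \<or> (x = R180 k \<and> R180 k \<in> K)
     \<or> (x = R270 k \<and> R270 k \<in> K) \<or> (x = Hr k \<and> Hr k \<in> K) \<or> (x = Vr k \<and> Vr k \<in> K)
     \<or> (x = Dr k \<and> Dr k \<in> K) \<or> (x = D'r k \<and> D'r k \<in> K)" using \<open>x \<in> K\<close> unfolding d4_def
      by (elim insertE emptyE) simp_all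
  qed auto
  have n90: "R90 k \<in> K \<longleftrightarrow> l1 = l2 \<and> l2 = l3 \<and> l3 = l4" unfolding m90 prod.inject by arith
  have n180: "R180 k \<in> K \<longleftrightarrow> l1 = l3 \<and> l2 = l4" unfolding m180 prod.inject by arith
  have n270: "R270 k \<in> K \<longleftrightarrow> l1 = l2 \<and> l2 = l3 \<and> l3 = l4" unfolding m270 prod.inject by arith
  have nH: "Hr k \<in> K \<longleftrightarrow> l1 = l4 \<and> l2 = l3" unfolding mH prod.inject by arith
  have nV: "Vr k \<in> K \<longleftrightarrow> l1 = l2 \<and> l3 = l4" unfolding mV prod.inject by arith
  have nD: "Dr k \<in> K \<longleftrightarrow> l2 = l4" unfolding mD prod.inject by arith
  have nD': "D'r k \<in> K \<longleftrightarrow> l1 = l3" unfolding mD' prod.inject by arith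
  have mem: "x \<in> K \<longleftrightarrow> x = R0 k \<or> (x = R90 k \<and> l1 = l2 \<and> l2 = l3 \<and> l3 = l4)
     \<or> (x = R180 k \<and> l1 = l3 \<and> l2 = l4) \<or> (x = R270 k \<and> l1 = l2 \<and> l2 = l3 \<and> l3 = l4)
     \<or> (x = Hr k \<and> l1 = l4 \<and> l2 = l3) \<or> (x = Vr k \<and> l1 = l2 \<and> l3 = l4)
     \<or> (x = Dr k \<and> l2 = l4) \<or> (x = D'r k \<and> l1 = l3)" for x
    unfolding mem0[of x] m0[THEN eqTrueI] n90 n180 n270 nH nV nD nD' by (simp only: simp_thms)
  have dist: "distinct [R0 k, R90 k, R180 k, R270 k, Hr k, Vr k, Dr k, D'r k]"
    using distinct8[OF assms(1)] .
  then have card8: "card (d4 k) = 8" unfolding d4_def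
    using distinct_card[OF dist] by simp
  have idR0: "id = R0 k" by (simp add: R0_def)
  have gD: "generated {Dr k} = {R0 k, Dr k}" using gen1[OF comps(1)] idR0 by simp
  have gD': "generated {D'r k} = {R0 k, D'r k}" using gen1[OF comps(2)] idR0 by simp
  have gV: "generated {Vr k} = {R0 k, Vr k}" using gen1[OF comps(3)] idR0 by simp
  have gDD: "generated {Dr k, D'r k} = {R0 k, Dr k, D'r k, R180 k}" using gen2 idR0 by simp
  show ?thesis
  proof (intro conjI impI)
    assume h: "l1 = l2 \<and> l2 = l3 \<and> l3 = l4"
    have "K = d4 k" using h by (intro set_eqI, simp only: mem, simp add: d4_def)
    then show "K = d4 k" "d4_index k K = 1" using card8 by (auto simp: d4_index_def)
  next
    assume h: "l1 = l3 \<and> l3 > l2 \<and> l2 = l4"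
    have "K = {R0 k, Dr k, D'r k, R180 k}" using h c by (intro set_eqI, simp only: mem, auto)
    moreover have "card {R0 k, Dr k, D'r k, R180 k} = 4" using dist by auto
    ultimately show "K = generated {Dr k, D'r k}" "d4_index k K = 2" using card8 gDD by (auto simp: d4_index_def)
  next
    assume h: "l1 = l2 \<and> l2 > l3 \<and> l3 = l4"
    have "K = {R0 k, Vr k}" using h c by (intro set_eqI, simp only: mem, auto)
    moreover have "card {R0 k, Vr k} = 2" using dist by auto
    ultimately show "K = generated {Vr k}" "d4_index k K = 4" using card8 gV by (auto simp: d4_index_def)
  next
    assume h: "l1 = l3 \<and> l2 \<noteq> l4"
    have "K = {R0 k, D'r k}" using h c by (intro set_eqI, simp only: mem, auto)
    moreover have "card {R0 k, D'r k} = 2" using dist by auto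
    ultimately show "K = generated {D'r k}" "d4_index k K = 4" using card8 gD' by (auto simp: d4_index_def)
  next
    assume h: "l2 = l4 \<and> l1 \<noteq> l3"
    have "K = {R0 k, Dr k}" using h c by (intro set_eqI, simp only: mem, auto)
    moreover have "card {R0 k, Dr k} = 2" using dist by auto
    ultimately show "K = generated {Dr k}" "d4_index k K = 4" using card8 gD by (auto simp: d4_index_def)
  next
    assume h: "\<not> (l1 = l2 \<and> l2 = l3 \<and> l3 = l4) \<and> \<not> (l1 = l3 \<and> l3 > l2 \<and> l2 = l4)
          \<and> \<not> (l1 = l2 \<and> l2 > l3 \<and> l3 = l4) \<and> \<not> (l1 = l3 \<and> l2 \<noteq> l4)
          \<and> \<not> (l2 = l4 \<and> l1 \<noteq> l3)"
    have f: "\<not>(l1 = l2 \<and> l2 = l3 \<and> l3 = l4)" "\<not>(l1 = l3 \<and> l2 = l4)" "\<not>(l1 = l4 \<and> l2 = l3)"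
      "\<not>(l1 = l2 \<and> l3 = l4)" "\<not> l2 = l4" "\<not> l1 = l3" using h c by arith+
    have "K = {R0 k}" by (intro set_eqI, simp only: mem f simp_thms, simp)
    then show "K = {id}" "d4_index k K = 8" using card8 idR0 by (auto simp: d4_index_def)
  qed
qed

end
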